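(* Let $M$ be an arbitrarily divisible monoid, let $N$ be a finite monoid, and let $\varphi \colon M \to N$ be a monoid morphism. Then the image $\varphi(M)$ is an idempotent monoid, i.e. $\varphi(m)^2 = \varphi(m)$ for every $m \in M$.
   Context: A monoid $M$ is called arbitrarily divisible if for every $m \in M$ and every positive integer $k$ there exists $m_k \in M$ with $(m_k)^k = m$. A monoid morphism $\varphi\colon M\to N$ satisfies $\varphi(1_M)=1_N$ and $\varphi(m_1m_2)=\varphi(m_1)\varphi(m_2)$. A monoid is idempotent if every element $e$ satisfies $e^2=e$. *)

theory Defs
  imports "HOL-Algebra.Group"
begin

definition arbitrarily_divisible :: "('a, 'b) monoid_scheme \<Rightarrow> bool" where
  "arbitrarily_divisible M \<longleftrightarrow>
     (\<forall>m \<in> carrier M. \<forall>k::nat. k > 0 \<longrightarrow> (\<exists>mk \<in> carrier M. mk [^]\<^bsub>M\<^esub> k = m))"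

definition monoid_morphism ::
  "('a, 'b) monoid_scheme \<Rightarrow> ('c, 'd) monoid_scheme \<Rightarrow> ('a \<Rightarrow> 'c) \<Rightarrow> bool" where
  "monoid_morphism M N \<phi> \<longleftrightarrow>
     (\<forall>m \<in> carrier M. \<phi> m \<in> carrier N) \<and>
     \<phi> \<one>\<^bsub>M\<^esub> = \<one>\<^bsub>N\<^esub> \<and>
     (\<forall>m1 \<in> carrier M. \<forall>m2 \<in> carrier M. \<phi> (m1 \<otimes>\<^bsub>M\<^esub> m2) = \<phi> m1 \<otimes>\<^bsub>N\<^esub> \<phi> m2)"

end

theory Submission
  imports Defs
begin

lemma (in monoid) pow_cycle:
  assumes fin: "finite (carrier G)" and x: "x \<in> carrier G"
  shows "\<exists>i p. 0 < p \<and> i \<le> card (carrier G) \<and> p \<le> card (carrier G) \<and> x [^] i = x [^] (i + p)"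
proof -
  let ?n = "card (carrier G)"
  have "(\<lambda>k. x [^] k) ` {0..?n} \<subseteq> carrier G" using x by auto
  hence "card ((\<lambda>k. x [^] k) ` {0..?n}) \<le> ?n" using fin card_mono by blast
  hence "\<not> inj_on (\<lambda>k. x [^] k) {0..?n}" by (intro pigeonhole) simp
  then obtain a b where ab: "a \<in> {0..?n}" "b \<in> {0..?n}" "a \<noteq> b" "x [^] a = x [^] b"
    unfolding inj_on_def by blast
  show ?thesis
  proof (cases "a < b")
    case True
    then show ?thesis using ab by (intro exI[of _ a] exI[of _ "b - a"]) auto
  next
    case False
    then show ?thesis using ab by (intro exI[of _ b] exI[of _ "a - b"]) auto
  qed
qed

lemma (in monoid) pow_cycle_mult:
  assumes x: "x \<in> carrier G" and e: "x [^] (i::nat) = x [^] (i + p)"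
  shows "x [^] (i + c) = x [^] (i + c + (t::nat) * p)"
proof (induction t)
  case 0 then show ?case by simp
next
  case (Suc t)
  have "x [^] (i + c + Suc t * p) = x [^] (i + p) \<otimes> x [^] (c + t * p)"
    using x by (simp add: nat_pow_mult algebra_simps)
  also have "\<dots> = x [^] i \<otimes> x [^] (c + t * p)" using e by simp
  also have "\<dots> = x [^] (i + c + t * p)" using x by (simp add: nat_pow_mult algebra_simps)
  finally show ?case using Suc by simp
qed

lemma (in monoid) fact_idem:
  assumes fin: "finite (carrier G)" and x: "x \<in> carrier G"
  shows "x [^] (fact (card (carrier G))::nat) \<otimes> x [^] (fact (card (carrier G))::nat) = x [^] (fact (card (carrier G))::nat)"
proof -
  let ?n = "card (carrier G)"
  let ?f = "fact ?n :: nat"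
  obtain i p where ip: "0 < p" "i \<le> ?n" "p \<le> ?n" "x [^] i = x [^] (i + p)"
    using pow_cycle[OF fin x] by blast
  have "p dvd ?f" using ip by (simp add: dvd_fact)
  then obtain t where t: "?f = t * p" by (metis dvd_def mult.commute)
  have "i \<le> ?f" using ip(2) fact_ge_self[of ?n] by linarith
  then obtain c where c: "?f = i + c" using le_Suc_ex by blast
  have "x [^] ?f \<otimes> x [^] ?f = x [^] (i + c + t * p)"
    using x nat_pow_mult[OF x, of "?f" "?f"] by (simp add: c[symmetric] t[symmetric])
  also have "\<dots> = x [^] (i + c)" using pow_cycle_mult[OF x ip(4)] by simp
  finally show ?thesis using c by simp
qed

lemma morph_pow:
  assumes "monoid M" "monoid N" "monoid_morphism M N \<phi>" "x \<in> carrier M"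
  shows "\<phi> (x [^]\<^bsub>M\<^esub> (k::nat)) = \<phi> x [^]\<^bsub>N\<^esub> k"
proof (induction k)
  case 0 then show ?case using assms by (simp add: monoid_morphism_def)
next
  case (Suc k)
  have "\<phi> (x [^]\<^bsub>M\<^esub> Suc k) = \<phi> (x [^]\<^bsub>M\<^esub> k \<otimes>\<^bsub>M\<^esub> x)" by simp
  also have "\<dots> = \<phi> (x [^]\<^bsub>M\<^esub> k) \<otimes>\<^bsub>N\<^esub> \<phi> x"
    using assms monoid.nat_pow_closed[OF assms(1)] by (simp add: monoid_morphism_def)
  finally show ?case using Suc by simp
qed

theorem proposition2:
  fixes M :: "('a, 'b) monoid_scheme" and N :: "('c, 'd) monoid_scheme" and \<phi> :: "'a \<Rightarrow> 'c"
  assumes "monoid M" and "arbitrarily_divisible M"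
    and "monoid N" and "finite (carrier N)"
    and "monoid_morphism M N \<phi>"
  shows "\<forall>m \<in> carrier M. \<phi> m \<otimes>\<^bsub>N\<^esub> \<phi> m = \<phi> m"
proof
  fix m assume m: "m \<in> carrier M"
  let ?k = "fact (card (carrier N)) :: nat"
  have "?k > 0" by simp
  then obtain y where y: "y \<in> carrier M" "y [^]\<^bsub>M\<^esub> ?k = m"
    using assms(2) m unfolding arbitrarily_divisible_def by blast
  have py: "\<phi> y \<in> carrier N" using assms(5) y(1) by (simp add: monoid_morphism_def)
  have "\<phi> m = \<phi> y [^]\<^bsub>N\<^esub> ?k" using morph_pow[OF assms(1,3,5) y(1), of ?k] y(2) by simp
  then show "\<phi> m \<otimes>\<^bsub>N\<^esub> \<phi> m = \<phi> m"
    using monoid.fact_idem[OF assms(3,4) py] by simp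
qed

end
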